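(* Let $p\in(1,2)$. For $u\in\mathbb{R}^2$ and indices $\kappa,\lambda,i,j\in\{1,2\}$ set $$A^{\kappa\lambda}_{ij}(u)=\delta_{\kappa\lambda}\delta_{ij}+\Big(\delta_{\kappa i}+\tfrac{2p}{2-p}\tfrac{u_iu_\kappa}{1+|u|^2}\Big)\Big(\delta_{\lambda j}+\tfrac{2p}{2-p}\tfrac{u_ju_\lambda}{1+|u|^2}\Big),$$ and for $z,\bar z\in\mathbb{R}^{2\times 2}$ let $A(u)(z,\bar z)=\sum_{\kappa,\lambda,i,j}A^{\kappa\lambda}_{ij}(u)z^\kappa_i\bar z^\lambda_j$. Let $g\colon\mathbb{R}\to[0,1]$ be a symmetric smooth function with $\mathbf{1}_{\{0\}}\le g\le\mathbf{1}_{(-1,1)}$, and put $m_g=(p-1)^{-1}\big(1+\sup_{s\in\mathbb{R}}\{|g'(s)|+2|g''(s)|s\}\big)$. Define $f\colon(\mathbb{R}^2\setminus\{0\})\times\mathbb{R}^{2\times2}\to\mathbb{R}$ by $$f(x,z)=\big(g(|z|^2)+m_g\,A(x/|x|)(z,z)\big)^{p/2}.$$ Then $f$ is smooth with respect to $z$, and there exist constants $L\ge\nu>0$ depending only on $p$ and $m_g$ such that: $D_{zz}f(x,z)$ is jointly continuous in $(x,z)\in(\mathbb{R}^2\setminus\{0\})\times\mathbb{R}^{2\times 2}$; $\nu|z|^p\le f(x,z)\le L(1+|z|)^p$; and $\nu(1+|z|)^{p-2}|\lambda|^2\le D_{zz}f(x,z)(\lambda,\lambda)\le L(1+|z|)^{p-2}|\lambda|^2$,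 for all $x\in\mathbb{R}^2\setminus\{0\}$ and $z,\lambda\in\mathbb{R}^{2\times2}$.
   Context: $\delta$ denotes the Kronecker delta and $\mathbf{1}_X$ the indicator function of a set $X$. For $z\in\mathbb{R}^{2\times 2}$, $z^\kappa_i$ denotes its entries and $|z|$ the Euclidean (Frobenius) norm. *)

theory Defs
  imports "HOL-Analysis.Analysis"
begin

fun dd :: "('a::real_normed_vector \<Rightarrow> real) \<Rightarrow> 'a list \<Rightarrow> 'a \<Rightarrow> real" where
  "dd f [] = f"
| "dd f (h # hs) = (\<lambda>z. frechet_derivative (dd f hs) (at z) h)"

definition smooth_on :: "'a::real_normed_vector set \<Rightarrow> ('a \<Rightarrow> real) \<Rightarrow> bool" where
  "smooth_on S f \<longleftrightarrow> (\<forall>hs z. z \<in> S \<longrightarrow> dd f hs differentiable (at z))"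

definition kdelta :: "2 \<Rightarrow> 2 \<Rightarrow> real" where
  "kdelta a b = (if a = b then 1 else 0)"

definition Acoef :: "real \<Rightarrow> real^2 \<Rightarrow> 2 \<Rightarrow> 2 \<Rightarrow> 2 \<Rightarrow> 2 \<Rightarrow> real" where
  "Acoef p u k l i j =
     kdelta k l * kdelta i j
     + (kdelta k i + (2*p/(2-p)) * (u$i * u$k) / (1 + (norm u)\<^sup>2))
     * (kdelta l j + (2*p/(2-p)) * (u$j * u$l) / (1 + (norm u)\<^sup>2))"

text \<open>A(u)(z,zbar), with z$k$i the entry z^k_i.\<close>
definition Aform :: "real \<Rightarrow> real^2 \<Rightarrow> real^2^2 \<Rightarrow> real^2^2 \<Rightarrow> real" where
  "Aform p u z zb = (\<Sum>k\<in>UNIV. \<Sum>l\<in>UNIV. \<Sum>i\<in>UNIV. \<Sum>j\<in>UNIV.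
      Acoef p u k l i j * z$k$i * zb$l$j)"

definition admissible_g :: "(real \<Rightarrow> real) \<Rightarrow> bool" where
  "admissible_g g \<longleftrightarrow> smooth_on UNIV g \<and> (\<forall>s. g (-s) = g s)
     \<and> (\<forall>s. 0 \<le> g s \<and> g s \<le> 1)
     \<and> g 0 = 1 \<and> (\<forall>s. \<bar>s\<bar> \<ge> 1 \<longrightarrow> g s = 0)"

definition m_g :: "real \<Rightarrow> (real \<Rightarrow> real) \<Rightarrow> real" where
  "m_g p g = (1 + (SUP s. \<bar>deriv g s\<bar> + 2 * \<bar>deriv (deriv g) s\<bar> * s)) / (p - 1)"

definition fdens :: "real \<Rightarrow> (real \<Rightarrow> real) \<Rightarrow> real^2 \<Rightarrow> real^2^2 \<Rightarrow> real" where
  "fdens p g x z = (g ((norm z)\<^sup>2) + m_g p g * Aform p (x /\<^sub>R norm x) z z) powr (p/2)"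

end

theory Submission
  imports Defs
begin



lemma g_DERIV:
  assumes "smooth_on UNIV g"
  shows "DERIV (dd g hs) s :> dd g (1 # hs) s"
proof -
  have d: "dd g hs differentiable (at s)" using assms unfolding smooth_on_def by blast
  have w: "(dd g hs has_derivative frechet_derivative (dd g hs) (at s)) (at s)"
    using d by (simp add: frechet_derivative_works)
  have lin: "linear (frechet_derivative (dd g hs) (at s))"
    using w by (rule has_derivative_linear)
  have e: "frechet_derivative (dd g hs) (at s) = (\<lambda>t. dd g (1 # hs) s * t)"
  proof
    fix t :: real
    have "frechet_derivative (dd g hs) (at s) (t *\<^sub>R 1) = t *\<^sub>R frechet_derivative (dd g hs) (at s) 1"
      by (rule linear_cmul[OF lin])
    then show "frechet_derivative (dd g hs) (at s) t = dd g (1 # hs) s * t" by simp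
  qed
  show ?thesis unfolding has_field_derivative_def using w unfolding e .
qed

lemma hd_powr:
  fixes F :: "'a::real_normed_vector \<Rightarrow> real"
  assumes "(F has_derivative F') (at z)" "0 < F z"
  shows "((\<lambda>z. F z powr a) has_derivative (\<lambda>h. F' h * (a * F z powr (a - 1)))) (at z)"
  using DERIV_compose_FDERIV[OF has_real_derivative_powr[OF assms(2)] assms(1)] by simp

inductive_set SC :: "(real \<Rightarrow> real) \<Rightarrow> ('a::real_normed_vector \<Rightarrow> real) set" for g where
  SC_const: "(\<lambda>z. c) \<in> SC g"
| SC_lin: "bounded_linear f \<Longrightarrow> f \<in> SC g"
| SC_add: "F \<in> SC g \<Longrightarrow> G \<in> SC g \<Longrightarrow> (\<lambda>z. F z + G z) \<in> SC g"
| SC_mult: "F \<in> SC g \<Longrightarrow> G \<in> SC g \<Longrightarrow> (\<lambda>z. F z * G z) \<in> SC g"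
| SC_g: "F \<in> SC g \<Longrightarrow> (\<lambda>z. dd g (replicate n 1) (F z)) \<in> SC g"
| SC_powr: "F \<in> SC g \<Longrightarrow> (\<forall>z. 0 < F z) \<Longrightarrow> (\<lambda>z. F z powr a) \<in> SC g"

lemma SC_deriv:
  assumes g: "smooth_on UNIV g" and "F \<in> SC g"
  shows "\<exists>F'. (\<forall>z. (F has_derivative F' z) (at z)) \<and> (\<forall>h. (\<lambda>z. F' z h) \<in> SC g)"
  using assms(2)
proof induction
  case (SC_const c)
  then show ?case by (intro exI[of _ "\<lambda>z h. 0"]) (simp add: SC.SC_const)
next
  case (SC_lin f)
  then show ?case by (intro exI[of _ "\<lambda>z. f"]) (simp add: SC.SC_const bounded_linear_imp_has_derivative)
next
  case (SC_add F G)
  then obtain F' G' where "\<forall>z. (F has_derivative F' z) (at z)" "\<forall>h. (\<lambda>z. F' z h) \<in> SC g"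
     "\<forall>z. (G has_derivative G' z) (at z)" "\<forall>h. (\<lambda>z. G' z h) \<in> SC g" by blast
  then show ?case by (intro exI[of _ "\<lambda>z h. F' z h + G' z h"]) (simp add: SC.SC_add has_derivative_add)
next
  case (SC_mult F G)
  then obtain F' G' where a: "\<forall>z. (F has_derivative F' z) (at z)" "\<forall>h. (\<lambda>z. F' z h) \<in> SC g"
     "\<forall>z. (G has_derivative G' z) (at z)" "\<forall>h. (\<lambda>z. G' z h) \<in> SC g" by blast
  show ?case
  proof (intro exI[of _ "\<lambda>z h. F z * G' z h + F' z h * G z"] conjI allI)
    fix z show "((\<lambda>z. F z * G z) has_derivative (\<lambda>h. F z * G' z h + F' z h * G z)) (at z)"
      using a by (auto intro!: has_derivative_mult)
  next
    fix h show "(\<lambda>z. F z * G' z h + F' z h * G z) \<in> SC g"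
    proof -
      have 1: "(\<lambda>z. G' z h) \<in> SC g" and 2: "(\<lambda>z. F' z h) \<in> SC g" using a by auto
      show ?thesis by (rule SC.SC_add[OF SC.SC_mult[OF SC_mult.hyps(1) 1] SC.SC_mult[OF 2 SC_mult.hyps(2)]])
    qed
  qed
next
  case (SC_g F n)
  then obtain F' where a: "\<forall>z. (F has_derivative F' z) (at z)" "\<forall>h. (\<lambda>z. F' z h) \<in> SC g" by blast
  show ?case
  proof (intro exI[of _ "\<lambda>z h. F' z h * dd g (replicate (Suc n) 1) (F z)"] conjI allI)
    fix z show "((\<lambda>z. dd g (replicate n 1) (F z)) has_derivative (\<lambda>h. F' z h * dd g (replicate (Suc n) 1) (F z))) (at z)"
      using DERIV_compose_FDERIV[where f="dd g (replicate n 1)" and g=F and x=z and f'="dd g (1 # replicate n 1) (F z)" and g'="F' z" and s=UNIV, OF g_DERIV[OF g]] a by simp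
  next
    fix h show "(\<lambda>z. F' z h * dd g (replicate (Suc n) 1) (F z)) \<in> SC g"
    proof -
      have 2: "(\<lambda>z. F' z h) \<in> SC g" using a by auto
      show ?thesis by (rule SC.SC_mult[OF 2 SC.SC_g[OF SC_g.hyps(1)]])
    qed
  qed
next
  case (SC_powr F a)
  then obtain F' where b: "\<forall>z. (F has_derivative F' z) (at z)" "\<forall>h. (\<lambda>z. F' z h) \<in> SC g" by blast
  show ?case
  proof (intro exI[of _ "\<lambda>z h. F' z h * (a * F z powr (a - 1))"] conjI allI)
    fix z show "((\<lambda>z. F z powr a) has_derivative (\<lambda>h. F' z h * (a * F z powr (a - 1)))) (at z)"
      using b SC_powr.hyps by (intro hd_powr) auto
  next
    fix h show "(\<lambda>z. F' z h * (a * F z powr (a - 1))) \<in> SC g"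
    proof -
      have 2: "(\<lambda>z. F' z h) \<in> SC g" using b by auto
      show ?thesis by (rule SC.SC_mult[OF 2 SC.SC_mult[OF SC.SC_const SC.SC_powr[OF SC_powr.hyps]]])
    qed
  qed
qed

lemma SC_dd:
  assumes g: "smooth_on UNIV g" and "F \<in> SC g"
  shows "dd F hs \<in> SC g"
proof (induction hs)
  case Nil then show ?case using assms by simp
next
  case (Cons h hs)
  then obtain F' where a: "\<forall>z. (dd F hs has_derivative F' z) (at z)" "\<forall>h. (\<lambda>z. F' z h) \<in> SC g"
    using SC_deriv[OF g] by blast
  have "dd F (h # hs) = (\<lambda>z. F' z h)"
  proof
    fix z show "dd F (h # hs) z = F' z h"
      using frechet_derivative_at[OF a(1)[rule_format, of z]] by simp
  qed
  then show ?case using a by simp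
qed

lemma SC_smooth:
  assumes g: "smooth_on UNIV g" and "F \<in> SC g"
  shows "smooth_on UNIV F"
  unfolding smooth_on_def
proof (intro allI impI)
  fix hs z
  obtain F' where "\<forall>z. (dd F hs has_derivative F' z) (at z)"
    using SC_deriv[OF g SC_dd[OF assms]] by blast
  then show "dd F hs differentiable at z" unfolding differentiable_def by blast
qed

lemma SC_sum:
  assumes "finite I" "\<And>i. i \<in> I \<Longrightarrow> F i \<in> SC g"
  shows "(\<lambda>z. \<Sum>i\<in>I. F i z) \<in> SC g"
  using assms by (induction I rule: finite_induct) (simp_all add: SC.SC_const SC.SC_add)


definition bb :: "(real \<Rightarrow> real) \<Rightarrow> real \<Rightarrow> real^2^2 \<Rightarrow> real^2^2 \<Rightarrow> real" where
  "bb g m W z = g (inner z z) + m * (inner z z + (inner W z)\<^sup>2)"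
definition Db :: "(real \<Rightarrow> real) \<Rightarrow> real \<Rightarrow> real^2^2 \<Rightarrow> real^2^2 \<Rightarrow> real^2^2 \<Rightarrow> real" where
  "Db g m W z h = dd g [1] (inner z z) * (2 * inner z h) + m * (2 * inner z h + 2 * inner W z * inner W h)"
definition D2 :: "(real \<Rightarrow> real) \<Rightarrow> real \<Rightarrow> real^2^2 \<Rightarrow> real^2^2 \<Rightarrow> real^2^2 \<Rightarrow> real^2^2 \<Rightarrow> real" where
  "D2 g m W z h k = dd g [1,1] (inner z z) * (2 * inner z h) * (2 * inner z k)
     + dd g [1] (inner z z) * (2 * inner h k) + m * (2 * inner h k + 2 * inner W h * inner W k)"

lemma bb_deriv:
  assumes g: "smooth_on UNIV g"
  shows "(bb g m W has_derivative Db g m W z) (at z)"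
proof -
  have i: "((\<lambda>z. inner z z) has_derivative (\<lambda>h. 2 * inner z h)) (at z)"
    by (auto intro!: derivative_eq_intros simp: inner_commute)
  have gg: "((\<lambda>z. g (inner z z)) has_derivative (\<lambda>h. 2 * inner z h * dd g [1] (inner z z))) (at z)"
    using DERIV_compose_FDERIV[where f=g and g="\<lambda>z. inner z z" and x=z and f'="dd g [1] (inner z z)"
      and s=UNIV, OF _ i] g_DERIV[OF g, of "[]" "inner z z"] by simp
  have "((\<lambda>z. g (inner z z) + m * (inner z z + (inner W z)\<^sup>2)) has_derivative
      (\<lambda>h. 2 * inner z h * dd g [1] (inner z z) + m * (2 * inner z h + 2 * inner W z * inner W h))) (at z)"
    apply (rule has_derivative_eq_rhs)
     apply (rule has_derivative_add[OF gg] has_derivative_mult_right has_derivative_add[OF i])+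
     apply (auto intro!: derivative_eq_intros)[1]
    apply (simp add: fun_eq_iff algebra_simps power2_eq_square)
    done
  then show ?thesis unfolding bb_def[abs_def] Db_def by (simp add: ac_simps)
qed

lemma Db_deriv:
  assumes g: "smooth_on UNIV g"
  shows "((\<lambda>z. Db g m W z k) has_derivative (\<lambda>h. D2 g m W z h k)) (at z)"
proof -
  have i: "((\<lambda>z. inner z z) has_derivative (\<lambda>h. 2 * inner z h)) (at z)"
    by (auto intro!: derivative_eq_intros simp: inner_commute)
  have gg: "((\<lambda>z. dd g [1] (inner z z)) has_derivative (\<lambda>h. 2 * inner z h * dd g [1,1] (inner z z))) (at z)"
    using DERIV_compose_FDERIV[where f="dd g [1]" and g="\<lambda>z. inner z z" and x=z and f'="dd g [1,1] (inner z z)"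
      and s=UNIV, OF _ i] g_DERIV[OF g, of "[1]" "inner z z"] by simp
  have "((\<lambda>z. dd g [1] (inner z z) * (2 * inner z k) + m * (2 * inner z k + 2 * inner W z * inner W k)) has_derivative
      (\<lambda>h. D2 g m W z h k)) (at z)"
    unfolding D2_def
    apply (rule has_derivative_eq_rhs)
     apply (rule has_derivative_add has_derivative_mult[OF gg] has_derivative_mult_right)+
      apply (auto intro!: derivative_eq_intros)[1]
     apply (auto intro!: derivative_eq_intros)[1]
    apply (simp add: fun_eq_iff algebra_simps inner_commute)
    done
  then show ?thesis unfolding Db_def .
qed

definition f1 :: "real \<Rightarrow> (real \<Rightarrow> real) \<Rightarrow> real \<Rightarrow> real^2^2 \<Rightarrow> real^2^2 \<Rightarrow> real^2^2 \<Rightarrow> real" where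
  "f1 p g m W z k = (p/2) * bb g m W z powr (p/2 - 1) * Db g m W z k"
definition f2 :: "real \<Rightarrow> (real \<Rightarrow> real) \<Rightarrow> real \<Rightarrow> real^2^2 \<Rightarrow> real^2^2 \<Rightarrow> real^2^2 \<Rightarrow> real^2^2 \<Rightarrow> real" where
  "f2 p g m W z h k = (p/2) * ((p/2 - 1) * bb g m W z powr (p/2 - 2) * Db g m W z h * Db g m W z k
       + bb g m W z powr (p/2 - 1) * D2 g m W z h k)"

lemma dd_fb:
  assumes g: "smooth_on UNIV g" and pos: "\<And>z. 0 < bb g m W z"
  shows "dd (\<lambda>z. bb g m W z powr (p/2)) [h, k] z = f2 p g m W z h k"
proof -
  have 1: "dd (\<lambda>z. bb g m W z powr (p/2)) [k] = (\<lambda>z. f1 p g m W z k)"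
  proof
    fix z
    have "((\<lambda>z. bb g m W z powr (p/2)) has_derivative (\<lambda>h. Db g m W z h * ((p/2) * bb g m W z powr (p/2 - 1)))) (at z)"
      by (rule hd_powr[OF bb_deriv[OF g] pos])
    note e = frechet_derivative_at[OF this, symmetric]
    show "dd (\<lambda>z. bb g m W z powr (p/2)) [k] z = f1 p g m W z k"
      by (simp add: e f1_def)
  qed
  have "((\<lambda>z. f1 p g m W z k) has_derivative (\<lambda>h. f2 p g m W z h k)) (at z)"
    unfolding f1_def[abs_def]
    apply (rule has_derivative_eq_rhs)
     apply (rule has_derivative_const has_derivative_mult hd_powr[OF bb_deriv[OF g] pos] Db_deriv[OF g])+
    apply (simp add: fun_eq_iff f2_def algebra_simps)
    done
  note e = frechet_derivative_at[OF this, symmetric]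
  have "dd (\<lambda>z. bb g m W z powr (p/2)) [h, k] z = frechet_derivative (\<lambda>z. f1 p g m W z k) (at z) h"
    by (simp only: dd.simps(2)[of _ h "[k]"] 1)
  then show ?thesis by (simp add: e)
qed



definition Wm :: "real \<Rightarrow> real^2 \<Rightarrow> real^2^2" where
  "Wm p u = (\<chi> k i. kdelta k i + (2*p/(2-p)) * (u$i * u$k) / (1 + (norm u)\<^sup>2))"

lemma sum2: "(\<Sum>i\<in>(UNIV::2 set). f i) = f 1 + f 2"
  by (simp add: UNIV_2)

lemma inner22: "inner (z::real^2^2) w = z$1$1 * w$1$1 + z$1$2 * w$1$2 + z$2$1 * w$2$1 + z$2$2 * w$2$2"
  by (simp add: inner_vec_def sum2)

lemma Aform_eq: "Aform p u z zb = inner z zb + inner (Wm p u) z * inner (Wm p u) zb"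
  unfolding Aform_def Acoef_def inner22 Wm_def
  by (simp add: sum2 kdelta_def algebra_simps)

lemma Wm_comp_bound:
  assumes "1 < p" "p < 2"
  shows "\<bar>Wm p u $ k $ i\<bar> \<le> 1 + 2*p/(2-p)"
proof -
  have c: "0 < 2*p/(2-p)" using assms by simp
  have "\<bar>u$i\<bar> \<le> norm u" "\<bar>u$k\<bar> \<le> norm u" by (simp_all add: component_le_norm_cart)
  then have "\<bar>u$i * u$k\<bar> \<le> (norm u)\<^sup>2"
    unfolding abs_mult power2_eq_square by (rule mult_mono) auto
  then have q: "\<bar>(u$i * u$k) / (1 + (norm u)\<^sup>2)\<bar> \<le> 1"
  proof -
    assume a: "\<bar>u$i * u$k\<bar> \<le> (norm u)\<^sup>2"
    have b: "0 < 1 + (norm u)\<^sup>2" by (metis add_pos_nonneg zero_less_one zero_le_power2)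
    have "\<bar>(u$i * u$k) / (1 + (norm u)\<^sup>2)\<bar> = \<bar>u$i * u$k\<bar> / (1 + (norm u)\<^sup>2)"
      using b by (simp only: abs_divide abs_of_pos)
    also have "\<dots> \<le> 1" using a b by (simp only: pos_divide_le_eq mult_1)
    finally show ?thesis .
  qed
  define c where "c = 2*p/(2-p)"
  define Q where "Q = (u$i * u$k) / (1 + (norm u)\<^sup>2)"
  have c': "0 < c" using c c_def by simp
  have "\<bar>c * Q\<bar> \<le> c" using q[folded Q_def] c'
    by (simp add: abs_mult mult_le_cancel_left1)
  moreover have "\<bar>kdelta k i\<bar> \<le> 1" by (simp add: kdelta_def)
  moreover have "Wm p u $ k $ i = kdelta k i + c * Q" unfolding Wm_def c_def Q_def by simp
  ultimately show ?thesis unfolding c_def[symmetric] by linarith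
qed
lemma Wm_norm2:
  assumes "1 < p" "p < 2"
  shows "(norm (Wm p u))\<^sup>2 \<le> 4 * (1 + 2*p/(2-p))\<^sup>2"
proof -
  let ?V = "1 + 2*p/(2-p)"
  have s: "\<And>k i. (Wm p u $ k $ i)\<^sup>2 \<le> ?V\<^sup>2"
  proof -
    fix k i
    have "0 < 2*p/(2-p)" using assms by simp
    then have "0 < ?V" by linarith
    then have "\<bar>Wm p u $ k $ i\<bar> \<le> \<bar>?V\<bar>" using Wm_comp_bound[OF assms, of u k i] by simp
    then show "(Wm p u $ k $ i)\<^sup>2 \<le> ?V\<^sup>2" by (simp only: abs_le_square_iff)
  qed
  have "(norm (Wm p u))\<^sup>2 = inner (Wm p u) (Wm p u)" by (simp add: power2_norm_eq_inner)
  also have "\<dots> = (Wm p u $ 1 $ 1)\<^sup>2 + (Wm p u $ 1 $ 2)\<^sup>2 + (Wm p u $ 2 $ 1)\<^sup>2 + (Wm p u $ 2 $ 2)\<^sup>2"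
    unfolding inner22 by (simp add: power2_eq_square)
  also have "\<dots> \<le> 4 * ?V\<^sup>2" using s[of 1 1] s[of 1 2] s[of 2 1] s[of 2 2] by linarith
  finally show ?thesis .
qed

lemma lf_bound:
  assumes "1 < p" "p < 2"
  shows "(inner (Wm p u) z)\<^sup>2 \<le> 4 * (1 + 2*p/(2-p))\<^sup>2 * (norm z)\<^sup>2"
proof -
  have "\<bar>inner (Wm p u) z\<bar> \<le> norm (Wm p u) * norm z" by (rule Cauchy_Schwarz_ineq2)
  then have "(inner (Wm p u) z)\<^sup>2 \<le> (norm (Wm p u) * norm z)\<^sup>2"
    by (simp only: abs_le_square_iff[symmetric] abs_mult abs_norm_cancel)
  also have "\<dots> = (norm (Wm p u))\<^sup>2 * (norm z)\<^sup>2" by (simp add: power_mult_distrib)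
  also have "\<dots> \<le> 4 * (1 + 2*p/(2-p))\<^sup>2 * (norm z)\<^sup>2"
    using Wm_norm2[OF assms] by (rule mult_right_mono) simp
  finally show ?thesis .
qed

definition hh :: "(real \<Rightarrow> real) \<Rightarrow> real \<Rightarrow> real" where
  "hh g s = \<bar>deriv g s\<bar> + 2 * \<bar>deriv (deriv g) s\<bar> * s"

lemma g_facts:
  assumes adm: "admissible_g g"
  shows "deriv g = dd g [1]" "deriv (deriv g) = dd g [1,1]"
    "bdd_above (range (hh g))"
    "continuous_on UNIV (dd g [1])" "continuous_on UNIV (dd g [1,1])" "continuous_on UNIV g"
proof -
  have sm: "smooth_on UNIV g" and g01: "\<And>s. 0 \<le> g s \<and> g s \<le> 1"
    and g0: "g 0 = 1" and gz: "\<And>s. \<bar>s\<bar> \<ge> 1 \<Longrightarrow> g s = 0"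
    using adm unfolding admissible_g_def by auto
  have D0: "\<And>s. DERIV g s :> dd g [1] s" using g_DERIV[OF sm, of "[]"] by simp
  have D1: "\<And>s. DERIV (dd g [1]) s :> dd g [1,1] s" using g_DERIV[OF sm, of "[1]"] by simp
  have D2: "\<And>s. DERIV (dd g [1,1]) s :> dd g [1,1,1] s" using g_DERIV[OF sm, of "[1,1]"] by simp
  show e1: "deriv g = dd g [1]" using D0 DERIV_imp_deriv by blast
  show e2: "deriv (deriv g) = dd g [1,1]" unfolding e1 using D1 DERIV_imp_deriv by blast
  show c0: "continuous_on UNIV g"
    using D0 DERIV_isCont continuous_at_imp_continuous_on by blast
  show c1: "continuous_on UNIV (dd g [1])"
    using D1 DERIV_isCont continuous_at_imp_continuous_on by blast
  show c2: "continuous_on UNIV (dd g [1,1])"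
    using D2 DERIV_isCont continuous_at_imp_continuous_on by blast
  have z1: "dd g [1] s = 0" if "\<bar>s\<bar> > 1" for s
  proof (rule DERIV_local_const[OF D0])
    show "0 < \<bar>s\<bar> - 1" using that by simp
    show "\<forall>y. \<bar>s - y\<bar> < \<bar>s\<bar> - 1 \<longrightarrow> g s = g y"
    proof (intro allI impI)
      fix y assume "\<bar>s - y\<bar> < \<bar>s\<bar> - 1"
      then have "\<bar>y\<bar> > 1" by linarith
      then show "g s = g y" using gz that by simp
    qed
  qed
  have z2: "dd g [1,1] s = 0" if "\<bar>s\<bar> > 1" for s
  proof (rule DERIV_local_const[OF D1])
    show "0 < \<bar>s\<bar> - 1" using that by simp
    show "\<forall>y. \<bar>s - y\<bar> < \<bar>s\<bar> - 1 \<longrightarrow> dd g [1] s = dd g [1] y"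
    proof (intro allI impI)
      fix y assume "\<bar>s - y\<bar> < \<bar>s\<bar> - 1"
      then have "\<bar>y\<bar> > 1" by linarith
      then show "dd g [1] s = dd g [1] y" using z1 that by simp
    qed
  qed
  have hcont: "continuous_on UNIV (hh g)"
    unfolding hh_def[abs_def] e2 unfolding e1
    by (intro continuous_intros c1 c2)
  have "compact (hh g ` {-1..1})"
    by (rule compact_continuous_image) (auto intro: continuous_on_subset[OF hcont])
  then obtain B where B: "\<And>y. y \<in> hh g ` {-1..1} \<Longrightarrow> norm y \<le> B"
    using compact_imp_bounded bounded_iff by metis
  have "\<forall>s. hh g s \<le> B"
  proof
    fix s
    have B0: "0 \<le> B" using B[of "hh g 0"] by auto
    show "hh g s \<le> B"
    proof (cases "\<bar>s\<bar> \<le> 1")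
      case True
      then have "s \<in> {-1..1}" by (auto simp: abs_le_iff)
      then have "\<bar>hh g s\<bar> \<le> B" using B[of "hh g s"] by auto
      then show ?thesis by linarith
    next
      case False then show ?thesis using z1 z2 B0 unfolding hh_def e2 unfolding e1 by simp
    qed
  qed
  then show "bdd_above (range (hh g))" by (auto intro: bdd_aboveI)
qed

lemma mg_eq: "m_g p g = (1 + Sup (range (hh g))) / (p - 1)"
  unfolding m_g_def hh_def by simp

lemma g_bounds:
  assumes adm: "admissible_g g"
  defines "T \<equiv> Sup (range (hh g))"
  shows "\<And>s. 0 \<le> s \<Longrightarrow> \<bar>dd g [1] s\<bar> + 2 * \<bar>dd g [1,1] s\<bar> * s \<le> T"
    "0 \<le> T" "\<And>s. 0 \<le> s \<Longrightarrow> 1 - T * s \<le> g s"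
proof -
  note gf = g_facts[OF adm]
  have hle: "hh g s \<le> T" for s
    unfolding T_def by (rule cSUP_upper) (use gf(3) in auto)
  show hb: "\<bar>dd g [1] s\<bar> + 2 * \<bar>dd g [1,1] s\<bar> * s \<le> T" if "0 \<le> s" for s
    using hle[of s] unfolding hh_def gf(2) unfolding gf(1) .
  show T0: "0 \<le> T" using hb[of 0] by simp
  have sm: "smooth_on UNIV g" and g0: "g 0 = 1"
    using adm unfolding admissible_g_def by auto
  have D0: "\<And>s. DERIV g s :> dd g [1] s" using g_DERIV[OF sm, of "[]"] by simp
  show "1 - T * s \<le> g s" if s: "0 \<le> s" for s
  proof (cases "s = 0")
    case True then show ?thesis using g0 by simp
  next
    case False
    then have "0 < s" using s by simp
    from MVT2[OF this D0] obtain z where z: "0 < z" "z < s" "g s - g 0 = (s - 0) * dd g [1] z" by blast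
    have "0 \<le> 2 * \<bar>dd g [1,1] z\<bar> * z" using z(1) by simp
    then have "\<bar>dd g [1] z\<bar> \<le> T" using hb[of z] z(1) by linarith
    then have "- T \<le> dd g [1] z" by simp
    then have "s * (- T) \<le> s * dd g [1] z" using \<open>0 < s\<close> by (intro mult_left_mono) auto
    then show ?thesis using z(3) g0 by (simp add: mult.commute)
  qed
qed



lemma cs2:
  fixes A B X1 X2 Y1 Y2 :: real
  assumes "0 \<le> X1" "0 \<le> X2" "0 \<le> Y1" "0 \<le> Y2" "A\<^sup>2 \<le> X1 * Y1" "B\<^sup>2 \<le> X2 * Y2"
  shows "(A + B)\<^sup>2 \<le> (X1 + X2) * (Y1 + Y2)"
proof -
  have "(2 * \<bar>A\<bar> * \<bar>B\<bar>)\<^sup>2 = 4 * A\<^sup>2 * B\<^sup>2" by (simp add: power_mult_distrib)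
  also have "\<dots> \<le> 4 * (X1 * Y1) * (X2 * Y2)"
    using assms by (intro mult_mono) auto
  also have "\<dots> \<le> (X1 * Y2 + X2 * Y1)\<^sup>2"
  proof -
    have "0 \<le> (X1 * Y2 - X2 * Y1)\<^sup>2" by simp
    moreover have "(X1 * Y2 + X2 * Y1)\<^sup>2 - 4 * (X1 * Y1) * (X2 * Y2) = (X1 * Y2 - X2 * Y1)\<^sup>2"
      by (simp add: power2_eq_square algebra_simps)
    ultimately show ?thesis by linarith
  qed
  finally have h: "(2 * \<bar>A\<bar> * \<bar>B\<bar>)\<^sup>2 \<le> (X1 * Y2 + X2 * Y1)\<^sup>2" .
  have "2 * \<bar>A\<bar> * \<bar>B\<bar> \<le> X1 * Y2 + X2 * Y1"
    by (rule power2_le_imp_le[OF h]) (use assms in simp)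
  moreover have "A * B \<le> \<bar>A\<bar> * \<bar>B\<bar>" by (simp add: abs_mult[symmetric])
  ultimately have "2 * (A * B) \<le> X1 * Y2 + X2 * Y1" by linarith
  moreover have "(A + B)\<^sup>2 = A\<^sup>2 + 2 * (A * B) + B\<^sup>2" by (simp add: power2_eq_square algebra_simps)
  moreover have "(X1 + X2) * (Y1 + Y2) = X1 * Y1 + X2 * Y2 + (X1 * Y2 + X2 * Y1)" by (simp add: algebra_simps)
  ultimately show ?thesis using assms(5,6) by linarith
qed

lemma hess_lower_scalar:
  fixes p m T G g1 g2 s w L2 lz ll :: real
  assumes p: "1 < p" "p < 2" and T0: "0 \<le> T" and hT: "T = (p - 1) * m - 1"
    and G: "0 \<le> G" and s: "0 \<le> s" and L2: "0 \<le> L2" and w: "w\<^sup>2 \<le> s * L2"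
    and hb: "\<bar>g1\<bar> + 2 * \<bar>g2\<bar> * s \<le> T"
    and d: "0 < \<delta>" "\<delta> \<le> p - 1" "\<delta> * ((2 - p) * m + 1 + 2 * T) \<le> 1"
  defines "b \<equiv> G + m * (s + lz\<^sup>2)"
    and "Dv \<equiv> 2 * g1 * w + m * (2 * w + 2 * lz * ll)"
    and "DD \<equiv> 4 * g2 * w\<^sup>2 + 2 * g1 * L2 + m * (2 * L2 + 2 * ll\<^sup>2)"
  shows "2 * \<delta> * b * L2 \<le> b * DD - (1 - p/2) * Dv\<^sup>2"
proof -
  define r where "r = m - T + g1 + \<bar>g1\<bar>"
  define a where "a = g1 + m"
  have m1: "m - T = (2 - p) * m + 1" using hT by (simp add: algebra_simps)
  have mpos: "0 < m"
  proof -
    have h: "(p - 1) * m \<ge> 1" using hT T0 by linarith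
    show ?thesis
    proof (rule ccontr)
      assume "\<not> 0 < m"
      then have "(p - 1) * m \<le> 0" using p by (intro mult_nonneg_nonpos) auto
      then show False using h by linarith
    qed
  qed
  have "0 < (2 - p) * m" using p mpos by simp
  then have mT1: "1 \<le> m - T" using m1 by linarith
  have g2s: "2 * \<bar>g2\<bar> * s \<le> T - \<bar>g1\<bar>" using hb by linarith
  have "0 \<le> 2 * \<bar>g2\<bar> * s" using s by simp
  then have g1T: "\<bar>g1\<bar> \<le> T" using hb by linarith
  have S1: "r * L2 + m * ll\<^sup>2 \<le> DD / 2"
  proof -
    have "2 * \<bar>g2\<bar> * w\<^sup>2 \<le> 2 * \<bar>g2\<bar> * (s * L2)" using w by (intro mult_left_mono) auto
    moreover have "2 * \<bar>g2\<bar> * s * L2 \<le> (T - \<bar>g1\<bar>) * L2" using g2s L2 by (intro mult_right_mono) auto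
    moreover have "- (\<bar>g2\<bar> * w\<^sup>2) \<le> g2 * w\<^sup>2"
    proof -
      have "- \<bar>g2 * w\<^sup>2\<bar> \<le> g2 * w\<^sup>2" by linarith
      then show ?thesis by (simp add: abs_mult)
    qed
    moreover have "\<bar>g1\<bar> * L2 + g1 * L2 \<ge> 0"
    proof -
      have "0 \<le> \<bar>g1\<bar> + g1" by linarith
      from mult_nonneg_nonneg[OF this L2] show ?thesis by (simp add: algebra_simps)
    qed
    ultimately show ?thesis unfolding DD_def r_def by (simp add: algebra_simps)
  qed
  have r1: "1 \<le> r" using mT1 unfolding r_def by linarith
  have rmax: "r \<le> (2 - p) * m + 1 + 2 * T" using m1 g1T unfolding r_def by linarith
  define X where "X = a\<^sup>2 * s / r + m * lz\<^sup>2"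
  define Y where "Y = r * L2 + m * ll\<^sup>2"
  have Dv2: "Dv / 2 = a * w + m * lz * ll" unfolding Dv_def a_def by (simp add: algebra_simps)
  have S3: "(Dv / 2)\<^sup>2 \<le> X * Y"
    unfolding Dv2 X_def Y_def
  proof (rule cs2)
    show "0 \<le> a\<^sup>2 * s / r" using s r1 by simp
    show "0 \<le> m * lz\<^sup>2" using mpos by simp
    show "0 \<le> r * L2" using r1 L2 by simp
    show "0 \<le> m * ll\<^sup>2" using mpos by simp
    have "(a * w)\<^sup>2 = a\<^sup>2 * w\<^sup>2" by (simp add: power_mult_distrib)
    also have "\<dots> \<le> a\<^sup>2 * (s * L2)" using w by (intro mult_left_mono) auto
    also have "\<dots> = a\<^sup>2 * s / r * (r * L2)" using r1 by (simp add: field_simps)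
    finally show "(a * w)\<^sup>2 \<le> a\<^sup>2 * s / r * (r * L2)" .
    show "(m * lz * ll)\<^sup>2 \<le> m * lz\<^sup>2 * (m * ll\<^sup>2)" by (simp add: power_mult_distrib power2_eq_square)
  qed
  have S4: "m \<le> m * r - (2 - p) * a\<^sup>2"
  proof (cases "0 \<le> g1")
    case True
    have "g1 \<le> (p - 1) * m" using g1T hT True by linarith
    then have "(2 - p) * (g1 * g1) \<le> (2 - p) * (g1 * ((p - 1) * m))"
      using True p by (intro mult_left_mono) auto
    moreover have "(2 - p) * (g1 * ((p - 1) * m)) \<le> 2 * (g1 * ((p - 1) * m))"
      using True p mpos by (intro mult_right_mono) auto
    ultimately have "(2 - p) * (g1 * g1) \<le> 2 * (p - 1) * m * g1" by (simp add: algebra_simps)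
    moreover have "m * r - (2 - p) * a\<^sup>2 = m + 2 * (p - 1) * m * g1 - (2 - p) * (g1 * g1)"
      unfolding r_def a_def hT using True by (simp add: power2_eq_square algebra_simps)
    ultimately show ?thesis by linarith
  next
    case False
    have a0: "0 \<le> a" using g1T mT1 False unfolding a_def by linarith
    have am: "a \<le> m" using False unfolding a_def by linarith
    have "a\<^sup>2 \<le> m\<^sup>2" using a0 am by (intro power_mono) auto
    then have "(2 - p) * a\<^sup>2 \<le> (2 - p) * m\<^sup>2" using p by (intro mult_left_mono) auto
    moreover have "m * r = m * (m - T)" unfolding r_def using False by simp
    moreover have "m * (m - T) - (2 - p) * m\<^sup>2 = m" using m1 by (simp add: power2_eq_square algebra_simps)
    ultimately show ?thesis by linarith
  qed
  have S5: "\<delta> * b \<le> b - (2 - p) * X"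
  proof -
    have e: "b - (2 - p) * X = G + s * (m * r - (2 - p) * a\<^sup>2) / r + (p - 1) * (m * lz\<^sup>2)"
      unfolding b_def X_def using r1 by (simp add: field_simps)
    have "s * m / r \<le> s * (m * r - (2 - p) * a\<^sup>2) / r"
      using S4 s r1 by (intro divide_right_mono mult_left_mono) auto
    moreover have "\<delta> * (m * s) \<le> s * m / r"
    proof -
      have "\<delta> * r \<le> \<delta> * ((2 - p) * m + 1 + 2 * T)" using rmax d(1) by (intro mult_left_mono) auto
      then have "\<delta> * r \<le> 1" using d(3) by linarith
      then have "\<delta> \<le> 1 / r" using r1 by (simp add: field_simps)
      then have "\<delta> * (m * s) \<le> 1 / r * (m * s)" using mpos s by (intro mult_right_mono) auto
      then show ?thesis by (simp add: mult.commute)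
    qed
    moreover have "\<delta> * G \<le> G" using d p G by (intro mult_left_le_one_le) auto
    moreover have "\<delta> * (m * lz\<^sup>2) \<le> (p - 1) * (m * lz\<^sup>2)" using d mpos by (intro mult_right_mono) auto
    moreover have "\<delta> * b = \<delta> * G + \<delta> * (m * s) + \<delta> * (m * lz\<^sup>2)" unfolding b_def by (simp add: algebra_simps)
    ultimately show ?thesis unfolding e by linarith
  qed
  have Y0: "0 \<le> Y" unfolding Y_def using r1 L2 mpos by simp
  have b0: "0 \<le> b" unfolding b_def using G s mpos by simp
  have d1: "\<delta> \<le> 1" using d p by linarith
  have "(2 - p) * (X * Y) \<le> (1 - \<delta>) * b * Y"
  proof -
    have h: "(2 - p) * X \<le> (1 - \<delta>) * b" using S5 by (simp add: algebra_simps)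
    show ?thesis using mult_right_mono[OF h Y0] by (simp add: mult.assoc)
  qed
  also have "\<dots> \<le> (1 - \<delta>) * b * (DD / 2)"
    using S1 b0 d1 unfolding Y_def by (intro mult_left_mono) auto
  finally have f1: "(2 - p) * (X * Y) \<le> (1 - \<delta>) * b * (DD / 2)" .
  have "(2 - p) * (Dv / 2)\<^sup>2 \<le> (2 - p) * (X * Y)" using S3 p by (intro mult_left_mono) auto
  with f1 have "(2 - p) * (Dv / 2)\<^sup>2 \<le> (1 - \<delta>) * b * (DD / 2)" by linarith
  moreover have "\<delta> * b * (r * L2) \<le> \<delta> * b * (DD / 2)"
  proof -
    have "0 \<le> m * ll\<^sup>2" using mpos by simp
    then have "r * L2 \<le> DD / 2" using S1 by linarith
    moreover have "0 \<le> \<delta> * b" using d b0 by simp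
    ultimately show ?thesis by (intro mult_left_mono) auto
  qed
  moreover have "\<delta> * b * L2 \<le> \<delta> * b * (r * L2)"
  proof -
    have "1 * L2 \<le> r * L2" using r1 L2 by (intro mult_right_mono) auto
    moreover have "0 \<le> \<delta> * b" using d b0 by simp
    ultimately show ?thesis by (intro mult_left_mono) auto
  qed
  ultimately have A: "(2 - p) * (Dv / 2)\<^sup>2 \<le> (1 - \<delta>) * b * (DD / 2)"
    and B: "\<delta> * b * (r * L2) \<le> \<delta> * b * (DD / 2)" and C: "\<delta> * b * L2 \<le> \<delta> * b * (r * L2)"
    by blast+
  define P where "P = Dv\<^sup>2"
  define V where "V = p * Dv\<^sup>2"
  define Q where "Q = b * DD"
  define R where "R = \<delta> * b * DD"
  define U where "U = \<delta> * b * (r * L2)"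
  define S where "S = \<delta> * b * L2"
  have e1: "(2 - p) * (Dv / 2)\<^sup>2 = P / 2 - V / 4" unfolding P_def V_def by (simp add: power_divide field_simps)
  have e2: "(1 - \<delta>) * b * (DD / 2) = (Q - R) / 2" unfolding Q_def R_def by (simp add: field_simps)
  have A': "P / 2 - V / 4 \<le> (Q - R) / 2" using A unfolding e1 e2 .
  have B': "U \<le> R / 2" using B unfolding U_def R_def by (simp add: algebra_simps)
  have C': "S \<le> U" using C unfolding U_def S_def .
  have "2 * S \<le> Q - P + V / 2" using A' B' C' by (simp add: field_simps)
  moreover have "b * DD - (1 - p/2) * Dv\<^sup>2 = Q - P + V / 2" unfolding Q_def P_def V_def by (simp add: field_simps)
  moreover have "2 * \<delta> * b * L2 = 2 * S" unfolding S_def by simp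
  ultimately show ?thesis by linarith
qed




lemma sq_powr: "0 \<le> (n::real) \<Longrightarrow> (n\<^sup>2) powr e = n powr (2 * e)"
proof (cases "n = 0")
  case True then show ?thesis by simp
next
  case False
  assume "0 \<le> n" then have n: "0 < n" using False by simp
  have "n\<^sup>2 = n powr 2" using powr_realpow[OF n, of 2] by simp
  then show ?thesis by (simp add: powr_powr)
qed

lemma b_bounds:
  fixes G m T s lz KW :: real
  assumes "1 - T * s \<le> G" "G \<le> 1" "1 \<le> m - T" "0 < m" "0 \<le> s" "lz\<^sup>2 \<le> KW * s" "0 \<le> KW"
  shows "1 + s \<le> G + m * (s + lz\<^sup>2)" "G + m * (s + lz\<^sup>2) \<le> (1 + m * (1 + KW)) * (1 + s)"
proof -
  have "1 * s \<le> (m - T) * s" using assms by (intro mult_right_mono) auto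
  moreover have "0 \<le> m * lz\<^sup>2" using assms by simp
  ultimately show "1 + s \<le> G + m * (s + lz\<^sup>2)" using assms(1) by (simp add: algebra_simps)
  have "m * lz\<^sup>2 \<le> m * (KW * s)" using assms by (intro mult_left_mono) auto
  moreover have "0 \<le> m * (1 + KW)" using assms by simp
  moreover have "0 \<le> m * (1 + KW) * s" using assms by simp
  moreover have "(1 + m * (1 + KW)) * (1 + s) = 1 + s + m * (1 + KW) + m * (1 + KW) * s" by (simp add: algebra_simps)
  moreover have "G + m * (s + lz\<^sup>2) = G + m * s + m * lz\<^sup>2" by (simp add: algebra_simps)
  moreover have "m * (1 + KW) * s = m * s + m * (KW * s)" by (simp add: algebra_simps)
  ultimately show "G + m * (s + lz\<^sup>2) \<le> (1 + m * (1 + KW)) * (1 + s)"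
    using assms(2,5) by argo
qed

lemma pow_split: "0 < (C::real) \<Longrightarrow> 0 \<le> n \<Longrightarrow> (C * (1 + n)\<^sup>2) powr e = C powr e * (1 + n) powr (2 * e)"
  by (simp add: powr_mult sq_powr)

lemma f2_lower:
  fixes b DD Dv L2 C n \<delta> p :: real
  assumes p: "1 < p" "p < 2" and b: "0 < b" "b \<le> C * (1 + n)\<^sup>2" and C: "0 < C" and n: "0 \<le> n"
    and d: "0 < \<delta>" and L2: "0 \<le> L2"
    and E: "2 * \<delta> * b * L2 \<le> b * DD - (1 - p/2) * Dv\<^sup>2"
  shows "p * \<delta> * C powr (p/2 - 1) * (1 + n) powr (p - 2) * L2
       \<le> (p/2) * ((p/2 - 1) * b powr (p/2 - 2) * Dv\<^sup>2 + b powr (p/2 - 1) * DD)"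
proof -
  have bb: "b powr (p/2 - 1) = b powr (p/2 - 2) * b"
  proof -
    have "b powr (p/2 - 2) * b powr 1 = b powr (p/2 - 2 + 1)" by (rule powr_add[symmetric])
    moreover have "b powr 1 = b" using b(1) by simp
    moreover have "p/2 - 2 + 1 = p/2 - 1" by simp
    ultimately show ?thesis by simp
  qed
  have eq: "(p/2) * ((p/2 - 1) * b powr (p/2 - 2) * Dv\<^sup>2 + b powr (p/2 - 1) * DD)
      = (p/2) * b powr (p/2 - 2) * (b * DD - (1 - p/2) * Dv\<^sup>2)"
    unfolding bb by (simp add: algebra_simps)
  have q0: "0 \<le> (p/2) * b powr (p/2 - 2)" using p by simp
  have "(p/2) * b powr (p/2 - 2) * (2 * \<delta> * b * L2) \<le> (p/2) * b powr (p/2 - 2) * (b * DD - (1 - p/2) * Dv\<^sup>2)"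
    by (rule mult_left_mono[OF E q0])
  moreover have "(p/2) * b powr (p/2 - 2) * (2 * \<delta> * b * L2) = p * \<delta> * L2 * b powr (p/2 - 1)"
    unfolding bb by (simp add: algebra_simps)
  moreover have "C powr (p/2 - 1) * (1 + n) powr (p - 2) \<le> b powr (p/2 - 1)"
  proof -
    have "(C * (1 + n)\<^sup>2) powr (p/2 - 1) \<le> b powr (p/2 - 1)"
      by (rule powr_mono2') (use p b in auto)
    moreover have "(C * (1 + n)\<^sup>2) powr (p/2 - 1) = C powr (p/2 - 1) * (1 + n) powr (p - 2)"
      using pow_split[OF C n, of "p/2 - 1"] by (simp add: algebra_simps)
    ultimately show ?thesis by simp
  qed
  moreover have "0 \<le> p * \<delta> * L2" using p d L2 by simp
  ultimately show ?thesis unfolding eq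
    by (smt (verit) mult_left_mono mult.commute mult.assoc)
qed

lemma f2_upper:
  fixes b DD Dv L2 n K2 p :: real
  assumes p: "1 < p" "p < 2" and b: "0 < b" "(1 + n)\<^sup>2 / 2 \<le> b" and n: "0 \<le> n"
    and L2: "0 \<le> L2" and K2: "0 \<le> K2" and DD: "DD \<le> K2 * L2"
  shows "(p/2) * ((p/2 - 1) * b powr (p/2 - 2) * Dv\<^sup>2 + b powr (p/2 - 1) * DD)
       \<le> (p/2) * K2 * 2 powr (1 - p/2) * (1 + n) powr (p - 2) * L2"
proof -
  have t1: "(p/2 - 1) * b powr (p/2 - 2) * Dv\<^sup>2 \<le> 0"
  proof -
    have "0 \<le> b powr (p/2 - 2) * Dv\<^sup>2" by simp
    moreover have "p/2 - 1 \<le> 0" using p by simp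
    ultimately show ?thesis by (simp add: mult_nonpos_nonneg mult.assoc)
  qed
  have h2: "(1/2::real) powr (p/2 - 1) = 2 powr (1 - p/2)"
  proof -
    have "(1/2::real) powr (p/2 - 1) = 1 powr (p/2 - 1) / 2 powr (p/2 - 1)" by (rule powr_divide)
    also have "\<dots> = 1 / 2 powr (p/2 - 1)" by (simp only: powr_one_eq_one)
    also have "\<dots> = 2 powr (- (p/2 - 1))" by (rule powr_minus_divide[symmetric])
    also have "\<dots> = 2 powr (1 - p/2)" by (rule arg_cong[where f="\<lambda>t. (2::real) powr t"]) simp
    finally show ?thesis .
  qed
  have bp: "b powr (p/2 - 1) \<le> 2 powr (1 - p/2) * (1 + n) powr (p - 2)"
  proof -
    have "b powr (p/2 - 1) \<le> ((1 + n)\<^sup>2 / 2) powr (p/2 - 1)"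
      by (rule powr_mono2') (use p b n in auto)
    also have "((1 + n)\<^sup>2 / 2) powr (p/2 - 1) = ((1/2) * (1 + n)\<^sup>2) powr (p/2 - 1)" by simp
    also have "\<dots> = (1/2) powr (p/2 - 1) * (1 + n) powr (p - 2)"
      using pow_split[of "1/2" n "p/2 - 1"] n by (simp add: algebra_simps)
    also have "\<dots> = 2 powr (1 - p/2) * (1 + n) powr (p - 2)" unfolding h2 ..
    finally show ?thesis .
  qed
  have "b powr (p/2 - 1) * DD \<le> b powr (p/2 - 1) * (K2 * L2)"
    using DD by (intro mult_left_mono) auto
  also have "\<dots> \<le> (2 powr (1 - p/2) * (1 + n) powr (p - 2)) * (K2 * L2)"
    using bp K2 L2 by (intro mult_right_mono) auto
  finally have t2: "b powr (p/2 - 1) * DD \<le> (2 powr (1 - p/2) * (1 + n) powr (p - 2)) * (K2 * L2)" .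
  have "(p/2) * ((p/2 - 1) * b powr (p/2 - 2) * Dv\<^sup>2 + b powr (p/2 - 1) * DD)
      \<le> (p/2) * ((2 powr (1 - p/2) * (1 + n) powr (p - 2)) * (K2 * L2))"
    using t1 t2 p by (intro mult_left_mono) auto
  then show ?thesis by (simp add: algebra_simps)
qed

lemma DD_upper:
  fixes g1 g2 w s L2 ll KW T m :: real
  assumes "\<bar>g1\<bar> + 2 * \<bar>g2\<bar> * s \<le> T" "0 \<le> s" "w\<^sup>2 \<le> s * L2" "0 \<le> L2" "ll\<^sup>2 \<le> KW * L2" "0 \<le> m"
  shows "4 * g2 * w\<^sup>2 + 2 * g1 * L2 + m * (2 * L2 + 2 * ll\<^sup>2) \<le> 2 * (T + m * (1 + KW)) * L2"
proof -
  have "g2 * w\<^sup>2 \<le> \<bar>g2\<bar> * w\<^sup>2" by (simp add: mult_right_mono)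
  also have "\<dots> \<le> \<bar>g2\<bar> * (s * L2)" using assms by (intro mult_left_mono) auto
  finally have a: "g2 * w\<^sup>2 \<le> \<bar>g2\<bar> * s * L2" by (simp add: mult.assoc)
  have b: "g1 * L2 \<le> \<bar>g1\<bar> * L2" using assms by (intro mult_right_mono) auto
  have c: "(\<bar>g1\<bar> + 2 * \<bar>g2\<bar> * s) * L2 \<le> T * L2" using assms by (intro mult_right_mono) auto
  have d: "m * ll\<^sup>2 \<le> m * (KW * L2)" using assms by (intro mult_left_mono) auto
  have e1: "(\<bar>g1\<bar> + 2 * \<bar>g2\<bar> * s) * L2 = \<bar>g1\<bar> * L2 + 2 * (\<bar>g2\<bar> * s * L2)" by (simp add: algebra_simps)
  have e2: "2 * (T + m * (1 + KW)) * L2 = 2 * (T * L2) + 2 * (m * L2) + 2 * (m * (KW * L2))" by (simp add: algebra_simps)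
  have e3: "4 * g2 * w\<^sup>2 + 2 * g1 * L2 + m * (2 * L2 + 2 * ll\<^sup>2) = 4 * (g2 * w\<^sup>2) + 2 * (g1 * L2) + 2 * (m * L2) + 2 * (m * ll\<^sup>2)"
    by (simp add: algebra_simps)
  show ?thesis unfolding e2 e3 using a b c d e1 by argo
qed



lemma fdens_eq: "fdens p g x = (\<lambda>z. bb g (m_g p g) (Wm p (x /\<^sub>R norm x)) z powr (p/2))"
  unfolding fdens_def bb_def Aform_eq power2_norm_eq_inner by (simp add: fun_eq_iff power2_eq_square)

lemma SC_coord: "(\<lambda>z::real^2^2. z$k$i) \<in> SC g"
  by (rule SC_lin) (rule bounded_linear_compose[OF bounded_linear_vec_nth bounded_linear_vec_nth])

lemma SC_inner: "(\<lambda>z::real^2^2. inner z z) \<in> SC g"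
proof -
  have "(\<lambda>z::real^2^2. z$1$1 * z$1$1 + z$1$2 * z$1$2 + z$2$1 * z$2$1 + z$2$2 * z$2$2) \<in> SC g"
    by (intro SC_add SC_mult SC_coord)
  moreover have "(\<lambda>z::real^2^2. inner z z) = (\<lambda>z::real^2^2. z$1$1 * z$1$1 + z$1$2 * z$1$2 + z$2$1 * z$2$1 + z$2$2 * z$2$2)"
    by (simp add: fun_eq_iff inner22)
  ultimately show ?thesis by simp
qed

lemma SC_bb: "bb g m W \<in> SC g"
proof -
  have 1: "(\<lambda>z::real^2^2. dd g (replicate 0 1) (inner z z)) \<in> SC g" by (rule SC_g[OF SC_inner])
  have 2: "(\<lambda>z::real^2^2. inner W z) \<in> SC g" by (rule SC_lin) (rule bounded_linear_inner_right)
  have "(\<lambda>z. dd g (replicate 0 1) (inner z z) + m * (inner z z + inner W z * inner W z)) \<in> SC g"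
    by (rule SC_add[OF 1 SC_mult[OF SC_const SC_add[OF SC_inner SC_mult[OF 2 2]]]])
  moreover have "bb g m W = (\<lambda>z. dd g (replicate 0 1) (inner z z) + m * (inner z z + inner W z * inner W z))"
    by (simp add: fun_eq_iff bb_def power2_eq_square)
  ultimately show ?thesis by simp
qed

lemma f2_cont:
  assumes adm: "admissible_g g" and pos: "\<And>x z. 0 < bb g m (Wm p (x /\<^sub>R norm x)) z"
  shows "continuous_on ({x. x \<noteq> 0} \<times> UNIV) (\<lambda>(x, z). f2 p g m (Wm p (x /\<^sub>R norm x)) z h k)"
proof -
  note gf = g_facts[OF adm]
  let ?S = "{x::real^2. x \<noteq> 0} \<times> (UNIV :: (real^2^2) set)"
  have cI: "continuous_on ?S (\<lambda>q. inner (snd q) (snd q))" by (intro continuous_intros)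
  have cG: "continuous_on ?S (\<lambda>q. g (inner (snd q) (snd q)))"
    by (rule continuous_on_compose2[OF gf(6) cI]) auto
  have cG1: "continuous_on ?S (\<lambda>q. dd g [1] (inner (snd q) (snd q)))"
    by (rule continuous_on_compose2[OF gf(4) cI]) auto
  have cG2: "continuous_on ?S (\<lambda>q. dd g [1,1] (inner (snd q) (snd q)))"
    by (rule continuous_on_compose2[OF gf(5) cI]) auto
  have cW: "continuous_on ?S (\<lambda>q. Wm p (fst q /\<^sub>R norm (fst q)))"
    unfolding Wm_def by (intro continuous_intros) auto
  have cB: "continuous_on ?S (\<lambda>q. bb g m (Wm p (fst q /\<^sub>R norm (fst q))) (snd q))"
    unfolding bb_def by (intro continuous_intros cG cW)
  have "continuous_on ?S (\<lambda>q. f2 p g m (Wm p (fst q /\<^sub>R norm (fst q))) (snd q) h k)"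
    unfolding f2_def Db_def D2_def
    by (intro continuous_intros cG1 cG2 cW cB) (use pos in \<open>auto simp: less_imp_neq[symmetric]\<close>)
  then show ?thesis by (simp add: case_prod_unfold)
qed




lemma cs_sq: "(inner (x::'a::real_inner) y)\<^sup>2 \<le> inner x x * inner y y"
proof -
  have "\<bar>inner x y\<bar> \<le> norm x * norm y" by (rule Cauchy_Schwarz_ineq2)
  then have "(inner x y)\<^sup>2 \<le> (norm x * norm y)\<^sup>2"
    by (simp only: abs_le_square_iff[symmetric] abs_mult abs_norm_cancel)
  also have "\<dots> = inner x x * inner y y" by (simp add: power_mult_distrib power2_norm_eq_inner)
  finally show ?thesis .
qed

theorem proposition3p1:
  fixes p :: real
  assumes "1 < p" and "p < 2"
  shows "\<forall>M. \<exists>\<nu> L. 0 < \<nu> \<and> \<nu> \<le> L \<and>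
    (\<forall>g. admissible_g g \<and> m_g p g = M \<longrightarrow>
       (\<forall>x. x \<noteq> 0 \<longrightarrow> smooth_on UNIV (fdens p g x))
     \<and> (\<forall>h k. continuous_on ({x. x \<noteq> 0} \<times> UNIV)
            (\<lambda>(x, z). dd (fdens p g x) [h, k] z))
     \<and> (\<forall>x z. x \<noteq> 0 \<longrightarrow>
            \<nu> * norm z powr p \<le> fdens p g x z \<and> fdens p g x z \<le> L * (1 + norm z) powr p)
     \<and> (\<forall>x z lam. x \<noteq> 0 \<longrightarrow>
            \<nu> * (1 + norm z) powr (p - 2) * (norm lam)\<^sup>2 \<le> dd (fdens p g x) [lam, lam] z
          \<and> dd (fdens p g x) [lam, lam] z \<le> L * (1 + norm z) powr (p - 2) * (norm lam)\<^sup>2))"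
proof (intro allI)
  fix M :: real
  note p = assms
  define V where "V = 1 + 2*p/(2-p)"
  define KW where "KW = 4 * V\<^sup>2"
  define T where "T = (p - 1) * M - 1"
  define C where "C = 1 + \<bar>M\<bar> * (1 + KW)"
  define rmax where "rmax = (2 - p) * M + 1 + 2 * T"
  define \<delta> where "\<delta> = min (p - 1) (1 / (1 + \<bar>rmax\<bar>))"
  define \<nu> where "\<nu> = min 1 (p * \<delta> * C powr (p/2 - 1))"
  define L where "L = max 1 (max (C powr (p/2)) ((p/2) * (2 * (\<bar>T\<bar> + \<bar>M\<bar> * (1 + KW))) * 2 powr (1 - p/2)))"
  have KW0: "0 \<le> KW" unfolding KW_def by simp
  have C0: "0 < C" unfolding C_def using KW0 by (simp add: add_pos_nonneg)
  have \<delta>0: "0 < \<delta>" unfolding \<delta>_def using p by simp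
  have \<delta>1: "\<delta> \<le> p - 1" unfolding \<delta>_def by simp
  have \<delta>2: "\<delta> * rmax \<le> 1"
  proof -
    have "\<delta> \<le> 1 / (1 + \<bar>rmax\<bar>)" unfolding \<delta>_def by simp
    then have "\<delta> * (1 + \<bar>rmax\<bar>) \<le> 1" by (simp add: field_simps)
    moreover have "\<delta> * rmax \<le> \<delta> * (1 + \<bar>rmax\<bar>)" using \<delta>0 by (intro mult_left_mono) auto
    ultimately show ?thesis by linarith
  qed
  have \<nu>0: "0 < \<nu>" unfolding \<nu>_def using p \<delta>0 C0 by simp
  have \<nu>1: "\<nu> \<le> 1" unfolding \<nu>_def by simp
  have \<nu>2: "\<nu> \<le> p * \<delta> * C powr (p/2 - 1)" unfolding \<nu>_def by simp
  have L1: "1 \<le> L" unfolding L_def by simp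
  have L2: "C powr (p/2) \<le> L" unfolding L_def by simp
  have L3: "(p/2) * (2 * (\<bar>T\<bar> + \<bar>M\<bar> * (1 + KW))) * 2 powr (1 - p/2) \<le> L" unfolding L_def by simp
  have main: "(\<forall>x. x \<noteq> 0 \<longrightarrow> smooth_on UNIV (fdens p g x))
     \<and> (\<forall>h k. continuous_on ({x. x \<noteq> 0} \<times> UNIV)
            (\<lambda>(x, z). dd (fdens p g x) [h, k] z))
     \<and> (\<forall>x z. x \<noteq> 0 \<longrightarrow>
            \<nu> * norm z powr p \<le> fdens p g x z \<and> fdens p g x z \<le> L * (1 + norm z) powr p)
     \<and> (\<forall>x z lam. x \<noteq> 0 \<longrightarrow>
            \<nu> * (1 + norm z) powr (p - 2) * (norm lam)\<^sup>2 \<le> dd (fdens p g x) [lam, lam] z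
          \<and> dd (fdens p g x) [lam, lam] z \<le> L * (1 + norm z) powr (p - 2) * (norm lam)\<^sup>2)"
    if adm: "admissible_g g" and mg: "m_g p g = M" for g
  proof -
    have TT: "Sup (range (hh g)) = T"
    proof -
      have "M = (1 + Sup (range (hh g))) / (p - 1)" using mg mg_eq by metis
      then have "M * (p - 1) = 1 + Sup (range (hh g))" using p by (simp add: field_simps)
      then show ?thesis unfolding T_def by (simp add: algebra_simps)
    qed
    have hb: "\<And>s. 0 \<le> s \<Longrightarrow> \<bar>dd g [1] s\<bar> + 2 * \<bar>dd g [1,1] s\<bar> * s \<le> T"
      using g_bounds(1)[OF adm] unfolding TT .
    have T0: "0 \<le> T" using g_bounds(2)[OF adm] unfolding TT .
    have gl: "\<And>s. 0 \<le> s \<Longrightarrow> 1 - T * s \<le> g s" using g_bounds(3)[OF adm] unfolding TT .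
    have gsm: "smooth_on UNIV g" and g01: "\<And>s. 0 \<le> g s \<and> g s \<le> 1"
      using adm unfolding admissible_g_def by auto
    have Mpos: "0 < M"
    proof (rule ccontr)
      assume "\<not> 0 < M"
      then have "(p - 1) * M \<le> 0" using p by (intro mult_nonneg_nonpos) auto
      then show False using T0 unfolding T_def by linarith
    qed
    have aM: "\<bar>M\<bar> = M" and aT: "\<bar>T\<bar> = T" using Mpos T0 by auto
    have mT: "1 \<le> M - T"
    proof -
      have "0 < (2 - p) * M" using p Mpos by simp
      moreover have "M - T = (2 - p) * M + 1" unfolding T_def by (simp add: algebra_simps)
      ultimately show ?thesis by linarith
    qed
    have lfb: "\<And>u (z::real^2^2). (inner (Wm p u) z)\<^sup>2 \<le> KW * inner z z"
      using lf_bound[OF p] unfolding KW_def V_def power2_norm_eq_inner .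
    have bds: "1 + inner z z \<le> bb g M (Wm p u) z \<and> bb g M (Wm p u) z \<le> C * (1 + inner z z)" for u :: "real^2" and z :: "real^2^2"
    proof -
      have s0: "0 \<le> inner z z" by simp
      note bb = b_bounds[OF gl[OF s0] conjunct2[OF g01] mT Mpos s0 lfb[of u z] KW0]
      show ?thesis using bb unfolding bb_def C_def aM by simp
    qed
    have pos: "\<And>u z. 0 < bb g M (Wm p u) z"
    proof -
      fix u :: "real^2" and z :: "real^2^2"
      have "0 \<le> inner z z" by simp
      then show "0 < bb g M (Wm p u) z" using bds[of z u] by linarith
    qed
    have fe: "\<And>x. fdens p g x = (\<lambda>z. bb g M (Wm p (x /\<^sub>R norm x)) z powr (p/2))"
      using fdens_eq mg by metis
    have d2: "\<And>x z h k. dd (fdens p g x) [h, k] z = f2 p g M (Wm p (x /\<^sub>R norm x)) z h k"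
      unfolding fe by (rule dd_fb[OF gsm pos])
    show ?thesis
    proof (intro conjI allI impI)
      fix x :: "real^2" assume "x \<noteq> 0"
      have "(\<lambda>z. bb g M (Wm p (x /\<^sub>R norm x)) z powr (p/2)) \<in> SC g"
        by (rule SC_powr[OF SC_bb]) (use pos in auto)
      then show "smooth_on UNIV (fdens p g x)" unfolding fe by (rule SC_smooth[OF gsm])
    next
      fix h k :: "real^2^2"
      have "(\<lambda>(x, z). dd (fdens p g x) [h, k] z) = (\<lambda>(x, z). f2 p g M (Wm p (x /\<^sub>R norm x)) z h k)"
        by (simp only: d2)
      then show "continuous_on ({x. x \<noteq> 0} \<times> UNIV) (\<lambda>(x, z). dd (fdens p g x) [h, k] z)"
        using f2_cont[OF adm pos] by simp
    next
      fix x :: "real^2" and z :: "real^2^2" assume "x \<noteq> 0"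
      define b where "b = bb g M (Wm p (x /\<^sub>R norm x)) z"
      define n where "n = norm z"
      have n0: "0 \<le> n" unfolding n_def by simp
      have s: "inner z z = n\<^sup>2" unfolding n_def by (simp add: power2_norm_eq_inner)
      have b1: "1 + n\<^sup>2 \<le> b" and b2: "b \<le> C * (1 + n\<^sup>2)" using bds[where u="x /\<^sub>R norm x" and z=z] unfolding b_def s by auto
      have f: "fdens p g x z = b powr (p/2)" unfolding fe b_def ..
      have "n powr p = (n\<^sup>2) powr (p/2)" using sq_powr[OF n0, of "p/2"] by simp
      also have "\<dots> \<le> b powr (p/2)" by (rule powr_mono2) (use p b1 in auto)
      finally have "n powr p \<le> b powr (p/2)" .
      moreover have "\<nu> * n powr p \<le> n powr p" using \<nu>1 \<nu>0 by (intro mult_left_le_one_le) auto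
      ultimately show "\<nu> * norm z powr p \<le> fdens p g x z" unfolding f n_def by linarith
      have "1 + n\<^sup>2 \<le> (1 + n)\<^sup>2" using n0 by (simp add: power2_eq_square algebra_simps)
      then have "C * (1 + n\<^sup>2) \<le> C * (1 + n)\<^sup>2" using C0 by (intro mult_left_mono) auto
      then have bC: "b \<le> C * (1 + n)\<^sup>2" using b2 by linarith
      have "b powr (p/2) \<le> (C * (1 + n)\<^sup>2) powr (p/2)"
      proof (rule powr_mono2[OF _ _ bC])
        show "0 \<le> b" using b1 zero_le_power2[of n] by linarith
      qed (use p in auto)
      also have "\<dots> = C powr (p/2) * (1 + n) powr p" using pow_split[OF C0 n0, of "p/2"] by simp
      also have "\<dots> \<le> L * (1 + n) powr p" using L2 by (intro mult_right_mono) auto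
      finally show "fdens p g x z \<le> L * (1 + norm z) powr p" unfolding f n_def .
    next
      fix x :: "real^2" and z lam :: "real^2^2" assume "x \<noteq> 0"
      define W where "W = Wm p (x /\<^sub>R norm x)"
      define b where "b = bb g M W z"
      define n where "n = norm z"
      define s where "s = inner z z"
      define L2 where "L2 = inner lam lam"
      define w where "w = inner z lam"
      define lz where "lz = inner W z"
      define ll where "ll = inner W lam"
      define g1 where "g1 = dd g [1] s"
      define g2 where "g2 = dd g [1,1] s"
      define Dv where "Dv = Db g M W z lam"
      define DD where "DD = D2 g M W z lam lam"
      have n0: "0 \<le> n" unfolding n_def by simp
      have sn: "s = n\<^sup>2" unfolding n_def s_def by (simp add: power2_norm_eq_inner)
      have s0: "0 \<le> s" unfolding s_def by simp
      have L20: "0 \<le> L2" unfolding L2_def by simp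
      have L2n: "L2 = (norm lam)\<^sup>2" unfolding L2_def by (simp add: power2_norm_eq_inner)
      have ws: "w\<^sup>2 \<le> s * L2" unfolding w_def s_def L2_def by (rule cs_sq)
      have beq: "b = g s + M * (s + lz\<^sup>2)" unfolding b_def bb_def s_def lz_def ..
      have Dveq: "Dv = 2 * g1 * w + M * (2 * w + 2 * lz * ll)"
        unfolding Dv_def Db_def g1_def s_def w_def lz_def ll_def by (simp add: algebra_simps)
      have DDeq: "DD = 4 * g2 * w\<^sup>2 + 2 * g1 * L2 + M * (2 * L2 + 2 * ll\<^sup>2)"
        unfolding DD_def D2_def g1_def g2_def s_def w_def L2_def ll_def by (simp add: power2_eq_square algebra_simps)
      have hbs: "\<bar>g1\<bar> + 2 * \<bar>g2\<bar> * s \<le> T" unfolding g1_def g2_def by (rule hb[OF s0])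
      have b1: "1 + s \<le> b" and b2: "b \<le> C * (1 + s)" using bds unfolding b_def W_def s_def by auto
      have bpos: "0 < b" using b1 s0 by linarith
      have f2eq: "dd (fdens p g x) [lam, lam] z = (p/2) * ((p/2 - 1) * b powr (p/2 - 2) * Dv\<^sup>2 + b powr (p/2 - 1) * DD)"
        unfolding d2 f2_def W_def[symmetric] b_def[symmetric] Dv_def[symmetric] DD_def[symmetric]
        by (simp add: power2_eq_square)
      have E: "2 * \<delta> * b * L2 \<le> b * DD - (1 - p/2) * Dv\<^sup>2"
        unfolding beq Dveq DDeq
      proof (rule hess_lower_scalar[OF p T0 T_def _ s0 L20 ws hbs \<delta>0 \<delta>1])
        show "0 \<le> g s" using g01 by simp
        show "\<delta> * ((2 - p) * M + 1 + 2 * T) \<le> 1" using \<delta>2 unfolding rmax_def .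
      qed
      have "1 + n\<^sup>2 \<le> (1 + n)\<^sup>2" using n0 by (simp add: power2_eq_square algebra_simps)
      then have "C * (1 + n\<^sup>2) \<le> C * (1 + n)\<^sup>2" using C0 by (intro mult_left_mono) auto
      then have bC: "b \<le> C * (1 + n)\<^sup>2" using b2 unfolding sn by linarith
      have low: "p * \<delta> * C powr (p/2 - 1) * (1 + n) powr (p - 2) * L2
          \<le> (p/2) * ((p/2 - 1) * b powr (p/2 - 2) * Dv\<^sup>2 + b powr (p/2 - 1) * DD)"
        by (rule f2_lower[OF p bpos bC C0 n0 \<delta>0 L20 E])
      have "\<nu> * ((1 + n) powr (p - 2) * L2) \<le> (p * \<delta> * C powr (p/2 - 1)) * ((1 + n) powr (p - 2) * L2)"
        using \<nu>2 L20 by (intro mult_right_mono) auto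
      then show "\<nu> * (1 + norm z) powr (p - 2) * (norm lam)\<^sup>2 \<le> dd (fdens p g x) [lam, lam] z"
        using low unfolding f2eq n_def[symmetric] L2n[symmetric] by (simp add: mult.assoc)
      have hb2: "(1 + n)\<^sup>2 / 2 \<le> b"
      proof -
        have "(1 + n)\<^sup>2 \<le> 2 * (1 + n\<^sup>2)"
        proof -
          have "0 \<le> (1 - n)\<^sup>2" by simp
          then show ?thesis by (simp add: power2_eq_square algebra_simps)
        qed
        then have "(1 + n)\<^sup>2 \<le> 2 * b" using b1 unfolding sn by argo
        then show ?thesis by simp
      qed
      have llb: "ll\<^sup>2 \<le> KW * L2" unfolding ll_def W_def L2_def by (rule lfb)
      have DDb: "DD \<le> 2 * (T + M * (1 + KW)) * L2"
        unfolding DDeq by (rule DD_upper[OF hbs s0 ws L20 llb]) (use Mpos in simp)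
      have K20: "0 \<le> 2 * (T + M * (1 + KW))" using T0 Mpos KW0 by simp
      have up: "(p/2) * ((p/2 - 1) * b powr (p/2 - 2) * Dv\<^sup>2 + b powr (p/2 - 1) * DD)
          \<le> (p/2) * (2 * (T + M * (1 + KW))) * 2 powr (1 - p/2) * (1 + n) powr (p - 2) * L2"
        by (rule f2_upper[OF p bpos hb2 n0 L20 K20 DDb])
      have "(p/2) * (2 * (T + M * (1 + KW))) * 2 powr (1 - p/2) * ((1 + n) powr (p - 2) * L2)
          \<le> L * ((1 + n) powr (p - 2) * L2)"
        using L3 L20 unfolding aT aM by (intro mult_right_mono) auto
      moreover have "dd (fdens p g x) [lam, lam] z \<le> (p/2) * (2 * (T + M * (1 + KW))) * 2 powr (1 - p/2) * ((1 + n) powr (p - 2) * L2)"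
        using up unfolding f2eq by (simp only: mult.assoc)
      ultimately have "dd (fdens p g x) [lam, lam] z \<le> L * ((1 + n) powr (p - 2) * L2)" by linarith
      then show "dd (fdens p g x) [lam, lam] z \<le> L * (1 + norm z) powr (p - 2) * (norm lam)\<^sup>2"
        unfolding n_def[symmetric] L2n[symmetric] by (simp only: mult.assoc)
    qed
  qed
  show "\<exists>\<nu> L. 0 < \<nu> \<and> \<nu> \<le> L \<and>
    (\<forall>g. admissible_g g \<and> m_g p g = M \<longrightarrow>
       (\<forall>x. x \<noteq> 0 \<longrightarrow> smooth_on UNIV (fdens p g x))
     \<and> (\<forall>h k. continuous_on ({x. x \<noteq> 0} \<times> UNIV)
            (\<lambda>(x, z). dd (fdens p g x) [h, k] z))
     \<and> (\<forall>x z. x \<noteq> 0 \<longrightarrow>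
            \<nu> * norm z powr p \<le> fdens p g x z \<and> fdens p g x z \<le> L * (1 + norm z) powr p)
     \<and> (\<forall>x z lam. x \<noteq> 0 \<longrightarrow>
            \<nu> * (1 + norm z) powr (p - 2) * (norm lam)\<^sup>2 \<le> dd (fdens p g x) [lam, lam] z
          \<and> dd (fdens p g x) [lam, lam] z \<le> L * (1 + norm z) powr (p - 2) * (norm lam)\<^sup>2))"
    apply (rule exI[of _ \<nu>], rule exI[of _ L])
    using \<nu>0 \<nu>1 L1 main by auto
qed


end
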